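(* There exists a universal constant $C>0$ with the following property. Let $n, M \in \mathbb{N}$, $0<\alpha<\tfrac12$, and $0<\delta<\tfrac12\min\left(1,\frac{C\alpha^{2}}{\sqrt{M}}\right)$. Let $\mu_M$ and $\nu_{M,\delta}$ be the probability measures on $[n]^M$ defined in the context. Then $$\|\mu_{M}-\nu_{M,\delta}\|_{\mathrm{TV}}\le \alpha .$$
   Context: $[n]=\{1,\dots,n\}$. For probability measures $\mu,\nu$ on a common measurable space, $\|\mu-\nu\|_{\mathrm{TV}}=\sup_A|\mu(A)-\nu(A)|$. The measure $\mu_M$ is the uniform distribution on $[n]^M$, i.e. the law of a vector $E=(E[1],\dots,E[M])$ with $E[i]$ i.i.d. uniform on $\{1,\dots,n\}$. The measure $\nu_{M,\delta}$ (for $0<\delta<1$) is the law of the vector $D=(D[1],\dots,D[M])$ constructed as follows: sample $E[1],\dots,E[M]$ i.i.d. uniform on $\{1,\dots,n\}$, independently sample $B[1],\dots,B[M]$ i.i.d. $\mathrm{Bernoulli}(\delta)$ and $E^{+}[1],\dots,E^{+}[M]$ i.i.d. uniform on $\{\lceil n/2\rceil,\dots,n\}$, and set $D[i]=E[i]$ if $B[i]=0$ and $D[i]=E^{+}[i]$ if $B[i]=1$. The constant $C$ does not depend on $n,M,\alpha,\delta$. *)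

theory Defs
  imports "HOL-Probability.Probability"
begin

definition tv_dist :: "'a pmf \<Rightarrow> 'a pmf \<Rightarrow> real" where
  "tv_dist p q = (SUP A. \<bar>measure_pmf.prob p A - measure_pmf.prob q A\<bar>)"

text \<open>Vectors in [n]^M are represented as functions nat \<Rightarrow> nat supported on
  coordinates 0..M-1 (value 0 outside), as produced by Pi_pmf.\<close>

definition mu :: "nat \<Rightarrow> nat \<Rightarrow> (nat \<Rightarrow> nat) pmf" where
  "mu n M = Pi_pmf {..<M} 0 (\<lambda>_. pmf_of_set {1..n})"

definition nu :: "nat \<Rightarrow> nat \<Rightarrow> real \<Rightarrow> (nat \<Rightarrow> nat) pmf" where
  "nu n M \<delta> =
     do { E \<leftarrow> Pi_pmf {..<M} 0 (\<lambda>_. pmf_of_set {1..n});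
          B \<leftarrow> Pi_pmf {..<M} False (\<lambda>_. bernoulli_pmf \<delta>);
          Ep \<leftarrow> Pi_pmf {..<M} 0 (\<lambda>_. pmf_of_set {nat \<lceil>real n / 2\<rceil>..n});
          return_pmf (\<lambda>i. if B i then Ep i else E i) }"

end

theory Submission
  imports Defs
begin

definition QQ :: "nat \<Rightarrow> real \<Rightarrow> nat pmf" where
  "QQ n \<delta> = pmf_of_set {1..n} \<bind> (\<lambda>e. bernoulli_pmf \<delta> \<bind> (\<lambda>b. pmf_of_set {nat \<lceil>real n / 2\<rceil>..n} \<bind> (\<lambda>ep. return_pmf (if b then ep else e))))"

lemma QQ_alt: "QQ n \<delta> = bernoulli_pmf \<delta> \<bind> (\<lambda>b. if b then pmf_of_set {nat \<lceil>real n / 2\<rceil>..n} else pmf_of_set {1..n})"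
proof -
  have "QQ n \<delta> = pmf_of_set {1..n} \<bind> (\<lambda>e. bernoulli_pmf \<delta> \<bind> (\<lambda>b. if b then pmf_of_set {nat \<lceil>real n / 2\<rceil>..n} else return_pmf e))"
    unfolding QQ_def
    by (intro bind_pmf_cong refl) (auto simp: bind_return_pmf' bind_pmf_const)
  also have "\<dots> = bernoulli_pmf \<delta> \<bind> (\<lambda>b. pmf_of_set {1..n} \<bind> (\<lambda>e. if b then pmf_of_set {nat \<lceil>real n / 2\<rceil>..n} else return_pmf e))"
    by (rule bind_commute_pmf)
  also have "\<dots> = bernoulli_pmf \<delta> \<bind> (\<lambda>b. if b then pmf_of_set {nat \<lceil>real n / 2\<rceil>..n} else pmf_of_set {1..n})"
    by (intro bind_pmf_cong refl) (auto simp: bind_return_pmf' bind_pmf_const)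
  finally show ?thesis .
qed

lemma pmf_QQ:
  assumes "n \<ge> 1" "0 \<le> \<delta>" "\<delta> \<le> 1"
  shows "pmf (QQ n \<delta>) k = \<delta> * indicator {nat \<lceil>real n / 2\<rceil>..n} k / real (card {nat \<lceil>real n / 2\<rceil>..n})
           + (1 - \<delta>) * indicator {1..n} k / real n"
proof -
  have ne: "{nat \<lceil>real n / 2\<rceil>..n} \<noteq> {}"
  proof -
    have "\<lceil>real n / 2\<rceil> \<le> int n" by linarith
    thus ?thesis by auto
  qed
  have ne2: "{1..n} \<noteq> {}" using assms by auto
  show ?thesis
    unfolding QQ_alt pmf_bind using assms ne ne2
    by (simp add: pmf_of_set mult_ac)
qed

lemma nu_eq: "nu n M \<delta> = Pi_pmf {..<M} 0 (\<lambda>_. QQ n \<delta>)"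
proof -
  let ?A = "{..<M}"
  let ?U = "pmf_of_set {1..n}"
  let ?V = "pmf_of_set {nat \<lceil>real n / 2\<rceil>..n}"
  let ?B = "bernoulli_pmf \<delta>"
  have "Pi_pmf ?A 0 (\<lambda>_. QQ n \<delta>) = Pi_pmf ?A 0 (\<lambda>_. ?U) \<bind> (\<lambda>E. Pi_pmf ?A 0 (\<lambda>x. ?B \<bind> (\<lambda>b. ?V \<bind> (\<lambda>ep. return_pmf (if b then ep else E x)))))"
    unfolding QQ_def by (rule Pi_pmf_bind) simp
  also have "\<dots> = Pi_pmf ?A 0 (\<lambda>_. ?U) \<bind> (\<lambda>E. Pi_pmf ?A False (\<lambda>_. ?B) \<bind> (\<lambda>B. Pi_pmf ?A 0 (\<lambda>x. ?V \<bind> (\<lambda>ep. return_pmf (if B x then ep else E x)))))"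
    by (intro bind_pmf_cong refl Pi_pmf_bind) simp
  also have "\<dots> = Pi_pmf ?A 0 (\<lambda>_. ?U) \<bind> (\<lambda>E. Pi_pmf ?A False (\<lambda>_. ?B) \<bind> (\<lambda>B. Pi_pmf ?A 0 (\<lambda>_. ?V) \<bind> (\<lambda>Ep. Pi_pmf ?A 0 (\<lambda>x. return_pmf (if B x then Ep x else E x)))))"
    by (intro bind_pmf_cong refl Pi_pmf_bind) simp
  also have "\<dots> = nu n M \<delta>"
    unfolding nu_def
  proof (intro bind_pmf_cong refl)
    fix E B Ep assume E: "E \<in> set_pmf (Pi_pmf ?A 0 (\<lambda>_. ?U))" and B: "B \<in> set_pmf (Pi_pmf ?A False (\<lambda>_. ?B))"
      and Ep: "Ep \<in> set_pmf (Pi_pmf ?A 0 (\<lambda>_. ?V))"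
    have "\<And>x. x \<notin> ?A \<Longrightarrow> B x = False" using set_Pi_pmf_subset[of ?A False] B by blast
    moreover have "\<And>x. x \<notin> ?A \<Longrightarrow> E x = 0" using set_Pi_pmf_subset[of ?A 0] E by blast
    ultimately show "Pi_pmf ?A 0 (\<lambda>x. return_pmf (if B x then Ep x else E x)) = return_pmf (\<lambda>i. if B i then Ep i else E i)"
      by (auto simp: fun_eq_iff)
  qed
  finally show ?thesis ..
qed

lemma sumsq_bound:
  fixes W :: "nat set" and \<delta> :: real
  assumes W: "W \<subseteq> {1..n}" and m: "card W = m" "m > 0" and nm: "n \<le> 2 * m" and n: "n \<ge> 1"
  shows "real n * (\<Sum>k\<in>{1..n}. (\<delta> * indicator W k / real m + (1 - \<delta>) * indicator {1..n} k / real n)\<^sup>2) \<le> 1 + \<delta>\<^sup>2"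
proof -
  let ?a = "\<delta> / real m" and ?b = "(1 - \<delta>) / real n"
  have "(\<Sum>k\<in>{1..n}. (\<delta> * indicator W k / real m + (1 - \<delta>) * indicator {1..n} k / real n)\<^sup>2)
      = (\<Sum>k\<in>{1..n}. (?a\<^sup>2 + 2 * ?a * ?b) * indicator W k + ?b\<^sup>2)"
    using m n by (intro sum.cong refl) (auto simp: indicator_def power2_eq_square field_simps)
  also have "\<dots> = (?a\<^sup>2 + 2 * ?a * ?b) * (\<Sum>k\<in>{1..n}. indicator W k) + real n * ?b\<^sup>2"
    by (simp add: sum.distrib sum_distrib_left)
  also have "(\<Sum>k\<in>{1..n}. indicator W k :: real) = real m"
  proof -
    have "(\<Sum>k\<in>{1..n}. indicator W k :: real) = real (card ({1..n} \<inter> W))"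
      by (simp add: indicator_def)
    also have "{1..n} \<inter> W = W" using W by auto
    finally show ?thesis using m by simp
  qed
  finally have eq: "(\<Sum>k\<in>{1..n}. (\<delta> * indicator W k / real m + (1 - \<delta>) * indicator {1..n} k / real n)\<^sup>2)
      = (?a\<^sup>2 + 2 * ?a * ?b) * real m + real n * ?b\<^sup>2" .
  have mpos: "real m > 0" using m by simp
  have npos: "real n > 0" using n by simp
  have key: "real n * \<delta>\<^sup>2 / real m \<le> 2 * \<delta>\<^sup>2"
  proof -
    have "real n \<le> 2 * real m" using nm by linarith
    hence "real n * \<delta>\<^sup>2 \<le> 2 * real m * \<delta>\<^sup>2" by (rule mult_right_mono) simp
    thus ?thesis using mpos by (simp add: divide_le_eq mult_ac)
  qed
  have "real n * ((?a\<^sup>2 + 2 * ?a * ?b) * real m + real n * ?b\<^sup>2)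
      = real n * \<delta>\<^sup>2 / real m + 2 * \<delta> * (1 - \<delta>) + (1 - \<delta>)\<^sup>2"
    using mpos npos by (simp add: field_simps power2_eq_square)
  also have "\<dots> \<le> 1 + \<delta>\<^sup>2" using key by (simp add: power2_eq_square algebra_simps)
  finally show ?thesis using eq by simp
qed

lemma tv_uniform_bound:
  fixes S :: "'a set" and q :: "'a pmf"
  assumes fin: "finite S" and ne: "S \<noteq> {}" and q: "set_pmf q \<subseteq> S"
  shows "\<bar>measure_pmf.prob (pmf_of_set S) A - measure_pmf.prob q A\<bar>
           \<le> sqrt (real (card S) * (\<Sum>x\<in>S. (pmf q x)\<^sup>2) - 1)"
proof -
  define c where "c = 1 / real (card S)"
  have cardpos: "real (card S) > 0" using fin ne by (simp add: card_gt_0_iff)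
  let ?p = "pmf_of_set S"
  have sp: "set_pmf ?p \<subseteq> S" using fin ne by simp
  have pp: "pmf ?p x = c" if "x \<in> S" for x using that fin ne by (simp add: c_def)
  define d where "d x = pmf ?p x - pmf q x" for x
  have probeq: "measure_pmf.prob r A = (\<Sum>x\<in>A \<inter> S. pmf r x)" if "set_pmf r \<subseteq> S" for r :: "'a pmf"
  proof -
    have "measure_pmf.prob r A = measure_pmf.prob r (A \<inter> S)"
      using that by (intro measure_pmf.finite_measure_eq_AE) (auto simp: AE_measure_pmf_iff)
    also have "\<dots> = (\<Sum>x\<in>A \<inter> S. pmf r x)"
      using fin by (intro measure_measure_pmf_finite) auto
    finally show ?thesis .
  qed
  have "\<bar>measure_pmf.prob ?p A - measure_pmf.prob q A\<bar> = \<bar>\<Sum>x\<in>A \<inter> S. d x\<bar>"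
    using probeq[OF sp] probeq[OF q] by (simp add: d_def sum_subtractf)
  also have "\<dots> \<le> (\<Sum>x\<in>A \<inter> S. \<bar>d x\<bar>)" by (rule sum_abs)
  also have "\<dots> \<le> (\<Sum>x\<in>S. \<bar>d x\<bar>)" using fin by (intro sum_mono2) auto
  also have "\<dots> \<le> sqrt (real (card S) * (\<Sum>x\<in>S. (pmf q x)\<^sup>2) - 1)"
  proof (rule real_le_rsqrt)
    have "(\<Sum>x\<in>S. \<bar>d x\<bar>)\<^sup>2 = (\<Sum>x\<in>S. 1 * \<bar>d x\<bar>)\<^sup>2" by simp
    also have "\<dots> \<le> (\<Sum>x\<in>S. 1\<^sup>2) * (\<Sum>x\<in>S. \<bar>d x\<bar>\<^sup>2)" by (rule Cauchy_Schwarz_ineq_sum)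
    also have "(\<Sum>x\<in>S. \<bar>d x\<bar>\<^sup>2) = (\<Sum>x\<in>S. c\<^sup>2 - 2 * c * pmf q x + (pmf q x)\<^sup>2)"
      by (intro sum.cong refl) (simp add: d_def pp power2_eq_square algebra_simps)
    also have "\<dots> = real (card S) * c\<^sup>2 - 2 * c * (\<Sum>x\<in>S. pmf q x) + (\<Sum>x\<in>S. (pmf q x)\<^sup>2)"
      by (simp add: sum.distrib sum_subtractf sum_distrib_left)
    also have "(\<Sum>x\<in>S. pmf q x) = 1" using fin q by (rule sum_pmf_eq_1)
    finally have "(\<Sum>x\<in>S. \<bar>d x\<bar>)\<^sup>2 \<le> real (card S) * (real (card S) * c\<^sup>2 - 2 * c * 1 + (\<Sum>x\<in>S. (pmf q x)\<^sup>2))"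
      by simp
    also have "real (card S) * (real (card S) * c\<^sup>2 - 2 * c * 1 + (\<Sum>x\<in>S. (pmf q x)\<^sup>2)) = real (card S) * (\<Sum>x\<in>S. (pmf q x)\<^sup>2) - 1"
      using cardpos by (simp add: c_def power2_eq_square field_simps)
    finally show "(\<Sum>x\<in>S. \<bar>d x\<bar>)\<^sup>2 \<le> real (card S) * (\<Sum>x\<in>S. (pmf q x)\<^sup>2) - 1" .
  qed
  finally show ?thesis .
qed

lemma sum_PiE_dflt_prod:
  fixes f :: "'b \<Rightarrow> real"
  assumes A: "finite A" and B: "finite B"
  shows "(\<Sum>g\<in>PiE_dflt A d (\<lambda>_. B). \<Prod>x\<in>A. f (g x)) = (\<Sum>y\<in>B. f y) ^ card A"
proof -
  let ?e = "\<lambda>h x. if x \<in> A then h x else d"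
  have inj: "inj_on ?e (PiE A (\<lambda>_. B))"
  proof (rule inj_onI)
    fix h1 h2 assume h1: "h1 \<in> PiE A (\<lambda>_. B)" and h2: "h2 \<in> PiE A (\<lambda>_. B)" and eq: "?e h1 = ?e h2"
    show "h1 = h2"
    proof (rule ext)
      fix x show "h1 x = h2 x"
      proof (cases "x \<in> A")
        case True thus ?thesis using fun_cong[OF eq, of x] by simp
      next
        case False thus ?thesis using h1 h2 by (simp add: PiE_def extensional_def)
      qed
    qed
  qed
  have "(\<Sum>g\<in>PiE_dflt A d (\<lambda>_. B). \<Prod>x\<in>A. f (g x)) = (\<Sum>g\<in>?e ` PiE A (\<lambda>_. B). \<Prod>x\<in>A. f (g x))"
    by (simp add: dflt_image_PiE)
  also have "\<dots> = (\<Sum>h\<in>PiE A (\<lambda>_. B). \<Prod>x\<in>A. f (?e h x))"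
    by (rule sum.reindex[OF inj, unfolded comp_def])
  also have "\<dots> = (\<Sum>h\<in>PiE A (\<lambda>_. B). \<Prod>x\<in>A. f (h x))"
    by (intro sum.cong refl prod.cong) auto
  also have "\<dots> = (\<Prod>x\<in>A. \<Sum>y\<in>B. f y)"
    using prod_sum_PiE[of A "\<lambda>_. B" "\<lambda>_. f", OF A B] by simp
  also have "\<dots> = (\<Sum>y\<in>B. f y) ^ card A" by simp
  finally show ?thesis .
qed


theorem lemma2:
  shows "\<exists>C::real. C > 0 \<and>
    (\<forall>(n::nat) (M::nat) (\<alpha>::real) (\<delta>::real).
       n \<ge> 1 \<longrightarrow> M \<ge> 1 \<longrightarrow> 0 < \<alpha> \<longrightarrow> \<alpha> < 1/2 \<longrightarrow>
       0 < \<delta> \<longrightarrow> \<delta> < (1/2) * min 1 (C * \<alpha>\<^sup>2 / sqrt (real M)) \<longrightarrow>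
       tv_dist (mu n M) (nu n M \<delta>) \<le> \<alpha>)"
proof (intro exI[of _ 1] conjI allI impI)
  fix n M :: nat and \<alpha> \<delta> :: real
  assume n: "n \<ge> 1" and M: "M \<ge> 1" and a0: "0 < \<alpha>" and a1: "\<alpha> < 1/2" and d0: "0 < \<delta>"
    and d1: "\<delta> < (1/2) * min 1 (1 * \<alpha>\<^sup>2 / sqrt (real M))"
  define h where "h = nat \<lceil>real n / 2\<rceil>"
  define W where "W = {h..n}"
  define m where "m = card W"
  have hceil: "\<lceil>real n / 2\<rceil> < real n / 2 + 1" by linarith
  have h1: "h \<ge> 1" using n unfolding h_def by (simp add: le_nat_iff)
  have h2: "2 * h \<le> n + 1" using hceil unfolding h_def by linarith
  have Wsub: "W \<subseteq> {1..n}" using h1 unfolding W_def by auto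
  have mdef: "m = n + 1 - h" unfolding m_def W_def by simp
  have mpos: "m > 0" using h2 n mdef by linarith
  have nm: "n \<le> 2 * m" using h2 mdef by linarith
  have dle: "\<delta> < 1/2" using d1 by linarith
  have dle2: "\<delta> < \<alpha>\<^sup>2 / (2 * sqrt (real M))" using d1 by linarith
  let ?Q = "QQ n \<delta>"
  have pQ: "pmf ?Q k = \<delta> * indicator W k / real m + (1 - \<delta>) * indicator {1..n} k / real n" for k
    using pmf_QQ[of n \<delta> k] n d0 dle unfolding W_def m_def h_def by simp
  have setQ: "set_pmf ?Q \<subseteq> {1..n}"
  proof
    fix k assume "k \<in> set_pmf ?Q"
    hence "pmf ?Q k \<noteq> 0" by (simp add: set_pmf_iff)
    show "k \<in> {1..n}"
    proof (rule ccontr)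
      assume nk: "k \<notin> {1..n}"
      hence "k \<notin> W" using Wsub by auto
      hence "pmf ?Q k = 0" using nk pQ[of k] by simp
      thus False using \<open>pmf ?Q k \<noteq> 0\<close> by simp
    qed
  qed
  define S where "S = PiE_dflt {..<M} (0::nat) (\<lambda>_. {1..n})"
  have finS: "finite S" unfolding S_def by auto
  have neS: "S \<noteq> {}" using n unfolding S_def by simp
  have cardS: "card S = n ^ M" unfolding S_def by (subst card_PiE_dflt) auto
  have mu_eq: "mu n M = pmf_of_set S"
    unfolding mu_def S_def using n by (intro Pi_pmf_of_set) auto
  have nu_sub: "set_pmf (nu n M \<delta>) \<subseteq> S"
  proof -
    have "set_pmf (nu n M \<delta>) \<subseteq> PiE_dflt {..<M} 0 (set_pmf \<circ> (\<lambda>_. ?Q))"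
      unfolding nu_eq by (rule set_Pi_pmf_subset') simp
    also have "\<dots> \<subseteq> S" using setQ unfolding S_def PiE_dflt_def by auto
    finally show ?thesis .
  qed
  define s where "s = (\<Sum>k\<in>{1..n}. (pmf ?Q k)\<^sup>2)"
  have s_nonneg: "s \<ge> 0" unfolding s_def by (intro sum_nonneg) simp
  have ns: "real n * s \<le> 1 + \<delta>\<^sup>2"
    unfolding s_def pQ using sumsq_bound[OF Wsub m_def[symmetric] mpos nm n, of \<delta>] by simp
  have sumsq: "(\<Sum>x\<in>S. (pmf (nu n M \<delta>) x)\<^sup>2) = s ^ M"
  proof -
    have "(\<Sum>x\<in>S. (pmf (nu n M \<delta>) x)\<^sup>2) = (\<Sum>x\<in>S. \<Prod>i\<in>{..<M}. (pmf ?Q (x i))\<^sup>2)"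
    proof (intro sum.cong refl)
      fix x assume "x \<in> S"
      hence "\<And>i. i \<notin> {..<M} \<Longrightarrow> x i = 0" unfolding S_def PiE_dflt_def by auto
      hence "pmf (nu n M \<delta>) x = (\<Prod>i\<in>{..<M}. pmf ?Q (x i))"
        unfolding nu_eq by (intro pmf_Pi') auto
      thus "(pmf (nu n M \<delta>) x)\<^sup>2 = (\<Prod>i\<in>{..<M}. (pmf ?Q (x i))\<^sup>2)"
        by (simp add: prod_power_distrib)
    qed
    also have "\<dots> = s ^ M"
      unfolding S_def s_def by (subst sum_PiE_dflt_prod) auto
    finally show ?thesis .
  qed
  have chi: "real (card S) * (\<Sum>x\<in>S. (pmf (nu n M \<delta>) x)\<^sup>2) \<le> (1 + \<delta>\<^sup>2) ^ M"
  proof -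
    have "real (card S) * (\<Sum>x\<in>S. (pmf (nu n M \<delta>) x)\<^sup>2) = (real n * s) ^ M"
      by (simp add: cardS sumsq power_mult_distrib)
    also have "\<dots> \<le> (1 + \<delta>\<^sup>2) ^ M" using ns s_nonneg by (intro power_mono) auto
    finally show ?thesis .
  qed
  have Mpos: "real M > 0" using M by simp
  have sqM: "sqrt (real M) > 0" using Mpos by simp
  have t_bound: "real M * \<delta>\<^sup>2 \<le> \<alpha>^4 / 4"
  proof -
    have "\<delta> * (2 * sqrt (real M)) < \<alpha>\<^sup>2" using dle2 sqM by (simp add: less_divide_eq)
    hence "(\<delta> * (2 * sqrt (real M)))\<^sup>2 \<le> (\<alpha>\<^sup>2)\<^sup>2"
      using d0 sqM by (intro power_mono) auto
    hence "4 * real M * \<delta>\<^sup>2 \<le> \<alpha>^4" using Mpos by (simp add: power_mult_distrib algebra_simps)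
    thus ?thesis by simp
  qed
  have asq: "\<alpha>\<^sup>2 \<le> 1/4"
  proof -
    have "\<alpha>\<^sup>2 \<le> (1/2)\<^sup>2" using a0 a1 by (intro power_mono) auto
    thus ?thesis by (simp add: power_divide)
  qed
  have a4: "\<alpha>^4 \<le> \<alpha>\<^sup>2 * (1/4)"
  proof -
    have "\<alpha>\<^sup>2 * \<alpha>\<^sup>2 \<le> \<alpha>\<^sup>2 * (1/4)" using asq by (intro mult_left_mono) auto
    moreover have "\<alpha>^4 = \<alpha>\<^sup>2 * \<alpha>\<^sup>2" by algebra
    ultimately show ?thesis by linarith
  qed
  have t_le: "real M * \<delta>\<^sup>2 \<le> 1/2" using t_bound a4 asq by linarith
  have exp_b: "(1 + \<delta>\<^sup>2) ^ M \<le> 1 + 2 * (real M * \<delta>\<^sup>2)"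
  proof -
    have "(1 + \<delta>\<^sup>2) ^ M \<le> exp (\<delta>\<^sup>2) ^ M"
      by (intro power_mono) (auto simp: exp_ge_add_one_self)
    also have "\<dots> = exp (real M * \<delta>\<^sup>2)" by (simp add: exp_of_nat_mult)
    also have "\<dots> \<le> 1 + 2 * (real M * \<delta>\<^sup>2)" using t_le by (intro real_exp_bound_lemma) auto
    finally show ?thesis .
  qed
  have final: "real (card S) * (\<Sum>x\<in>S. (pmf (nu n M \<delta>) x)\<^sup>2) - 1 \<le> \<alpha>\<^sup>2"
    using chi exp_b t_bound a4 zero_le_power2[of \<alpha>] by linarith
  have bound: "\<bar>measure_pmf.prob (mu n M) A - measure_pmf.prob (nu n M \<delta>) A\<bar> \<le> \<alpha>" for A
  proof -
    have "\<bar>measure_pmf.prob (mu n M) A - measure_pmf.prob (nu n M \<delta>) A\<bar>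
        \<le> sqrt (real (card S) * (\<Sum>x\<in>S. (pmf (nu n M \<delta>) x)\<^sup>2) - 1)"
      unfolding mu_eq by (rule tv_uniform_bound[OF finS neS nu_sub])
    also have "\<dots> \<le> sqrt (\<alpha>\<^sup>2)" using final by (rule real_sqrt_le_mono)
    also have "\<dots> = \<alpha>" using a0 by simp
    finally show ?thesis .
  qed
  show "tv_dist (mu n M) (nu n M \<delta>) \<le> \<alpha>"
    unfolding tv_dist_def by (rule cSUP_least) (auto intro: bound)
qed (simp)

end
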